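(* Let $\mathbb{K}$ be a field of characteristic not $2$ and $p\geq 1$. Let $f:M_{1,p}(\mathbb{K})\to\mathbb{K}$, $g:M_{p,1}(\mathbb{K})\to\mathbb{K}$, $\varphi:M_{1,p}(\mathbb{K})\to M_{1,p}(\mathbb{K})$, $\psi:M_{p,1}(\mathbb{K})\to M_{p,1}(\mathbb{K})$ be linear. For $L\in M_{1,p}(\mathbb{K})$, $C\in M_{p,1}(\mathbb{K})$ set $$A_L=\begin{bmatrix}0&L&0\\ 0_{p\times1}&0_{p\times p}&0_{p\times1}\\ f(L)&\varphi(L)&0\end{bmatrix},\qquad B_C=\begin{bmatrix}0&0_{1\times p}&0\\ \psi(C)&0_{p\times p}&C\\ g(C)&0_{1\times p}&0\end{bmatrix}\in M_{p+2}(\mathbb{K}).$$ Assume either (i) for all $(L,C)$, every linear combination of $A_L$ and $B_C$ has at most one nonzero eigenvalue in $\overline{\mathbb{K}}$; or (ii) $p\neq 2$ and for all $(L,C)$, every linear combination of $A_L$ and $B_C$ has at most two distinct eigenvalues in $\overline{\mathbb{K}}$. Then there exist $\lambda,\mu\in\mathbb{K}$ with $\varphi(L)=\lambda L$ and $\psi(C)=\mu C$ for all $L,C$.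
   Context: $\overline{\mathbb{K}}$ is an algebraic closure of $\mathbb{K}$; $M_{a,b}(\mathbb{K})$ is the space of $a\times b$ matrices. *)

theory Defs
  imports "Jordan_Normal_Form.Char_Poly" "HOL-Algebra.Algebraic_Closure_Type"
begin

definition lin_mat_map :: "nat \<Rightarrow> nat \<Rightarrow> nat \<Rightarrow> nat \<Rightarrow> ('a::field mat \<Rightarrow> 'a mat) \<Rightarrow> bool" where
  "lin_mat_map m n k l h \<longleftrightarrow>
     (\<forall>x\<in>carrier_mat m n. h x \<in> carrier_mat k l) \<and>
     (\<forall>x\<in>carrier_mat m n. \<forall>y\<in>carrier_mat m n. h (x + y) = h x + h y) \<and>
     (\<forall>a. \<forall>x\<in>carrier_mat m n. h (a \<cdot>\<^sub>m x) = a \<cdot>\<^sub>m h x)"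

definition lin_mat_form :: "nat \<Rightarrow> nat \<Rightarrow> ('a::field mat \<Rightarrow> 'a) \<Rightarrow> bool" where
  "lin_mat_form m n h \<longleftrightarrow>
     (\<forall>x\<in>carrier_mat m n. \<forall>y\<in>carrier_mat m n. h (x + y) = h x + h y) \<and>
     (\<forall>a. \<forall>x\<in>carrier_mat m n. h (a \<cdot>\<^sub>m x) = a * h x)"

definition A_mat :: "nat \<Rightarrow> ('a::field mat \<Rightarrow> 'a) \<Rightarrow> ('a mat \<Rightarrow> 'a mat) \<Rightarrow> 'a mat \<Rightarrow> 'a mat" where
  "A_mat p f \<phi> L = mat (p+2) (p+2) (\<lambda>(i,j).
      if i = 0 \<and> 1 \<le> j \<and> j \<le> p then L $$ (0, j - 1)
      else if i = p+1 \<and> j = 0 then f L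
      else if i = p+1 \<and> 1 \<le> j \<and> j \<le> p then (\<phi> L) $$ (0, j - 1)
      else 0)"

definition B_mat :: "nat \<Rightarrow> ('a::field mat \<Rightarrow> 'a) \<Rightarrow> ('a mat \<Rightarrow> 'a mat) \<Rightarrow> 'a mat \<Rightarrow> 'a mat" where
  "B_mat p g \<psi> C = mat (p+2) (p+2) (\<lambda>(i,j).
      if 1 \<le> i \<and> i \<le> p \<and> j = 0 then (\<psi> C) $$ (i - 1, 0)
      else if 1 \<le> i \<and> i \<le> p \<and> j = p+1 then C $$ (i - 1, 0)
      else if i = p+1 \<and> j = 0 then g C
      else 0)"

definition ac_eigenvalue :: "'a::field mat \<Rightarrow> 'a alg_closure \<Rightarrow> bool" where
  "ac_eigenvalue M k \<longleftrightarrow> eigenvalue (map_mat to_ac M) k"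

end

theory Submission
  imports Defs
begin

lemma sum_two_pts:
  fixes g :: "nat \<Rightarrow> 'a::field"
  assumes "i < p" "j < p" "i \<noteq> j"
  shows "(\<Sum>k<p. g k * (if k = i then a else if k = j then b else 0)) = g i * a + g j * b"
proof -
  have "(\<Sum>k<p. g k * (if k = i then a else if k = j then b else 0))
     = (\<Sum>k<p. (if k = i then g k * a else 0) + (if k = j then g k * b else 0))"
    by (rule sum.cong) (use assms in auto)
  also have "\<dots> = g i * a + g j * b"
    using assms by (simp add: sum.distrib)
  finally show ?thesis .
qed

lemma sum_three:
  fixes u y :: "nat \<Rightarrow> 'a::field"
  assumes "p \<ge> 3" "\<And>k. k \<ge> 3 \<Longrightarrow> y k = 0"
  shows "(\<Sum>k<p. u k * y k) = u 0 * y 0 + u 1 * y 1 + u 2 * y 2"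
proof -
  have "{..<p} = {..<3} \<union> {3..<p}" using assms by auto
  hence "(\<Sum>k<p. u k * y k) = (\<Sum>k\<in>{..<3} \<union> {3..<p}. u k * y k)" by (simp only:)
  also have "\<dots> = (\<Sum>k<3. u k * y k) + (\<Sum>k\<in>{3..<p}. u k * y k)"
    by (rule sum.union_disjoint) auto
  also have "(\<Sum>k\<in>{3..<p}. u k * y k) = 0" using assms by auto
  also have "(\<Sum>k<3. u k * y k) = u 0 * y 0 + u 1 * y 1 + u 2 * y 2"
    by (simp add: eval_nat_numeral)
  finally show ?thesis by simp
qed

lemma three_kernel:
  fixes u0 u1 u2 w0 w1 w2 :: "'a::field"
  shows "\<exists>a b c. (a \<noteq> 0 \<or> b \<noteq> 0 \<or> c \<noteq> 0) \<and> u0*a + u1*b + u2*c = 0 \<and> w0*a+w1*b+w2*c = 0"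
proof -
  define c0 where "c0 = u1*w2 - u2*w1"
  define c1 where "c1 = u2*w0 - u0*w2"
  define c2 where "c2 = u0*w1 - u1*w0"
  show ?thesis
  proof (cases "c0 \<noteq> 0 \<or> c1 \<noteq> 0 \<or> c2 \<noteq> 0")
    case True
    show ?thesis
      by (rule exI[of _ c0], rule exI[of _ c1], rule exI[of _ c2])
         (use True in \<open>auto simp: c0_def c1_def c2_def algebra_simps\<close>)
  next
    case False
    hence z: "c0 = 0" "c1 = 0" "c2 = 0" by auto
    show ?thesis
    proof (cases "u0 \<noteq> 0 \<or> u1 \<noteq> 0")
      case True
      show ?thesis
        by (rule exI[of _ u1], rule exI[of _ "-u0"], rule exI[of _ 0])
          (use True z in \<open>auto simp: c0_def c1_def c2_def algebra_simps\<close>)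
    next
      case F1: False
      show ?thesis
      proof (cases "u2 \<noteq> 0")
        case True
        show ?thesis
          by (rule exI[of _ u2], rule exI[of _ 0], rule exI[of _ "-u0"])
            (use True F1 z in \<open>auto simp: c0_def c1_def c2_def algebra_simps\<close>)
      next
        case F2: False
        show ?thesis
        proof (cases "w0 \<noteq> 0 \<or> w1 \<noteq> 0")
          case True
          show ?thesis
            by (rule exI[of _ w1], rule exI[of _ "-w0"], rule exI[of _ 0])
              (use True F1 F2 in \<open>auto simp: algebra_simps\<close>)
        next
          case F3: False
          show ?thesis
            by (rule exI[of _ 1], rule exI[of _ 0], rule exI[of _ 0])
              (use F1 F2 F3 in \<open>auto\<close>)
        qed
      qed
    qed
  qed
qed

lemma kernel2:
  fixes u w :: "nat \<Rightarrow> 'a::field"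
  assumes "p \<ge> 3"
  shows "\<exists>y. (\<exists>k<p. y k \<noteq> 0) \<and> (\<Sum>k<p. u k * y k) = 0 \<and> (\<Sum>k<p. w k * y k) = 0"
proof -
  obtain a b c where abc: "(a \<noteq> 0 \<or> b \<noteq> 0 \<or> c \<noteq> 0)" "u 0*a + u 1*b + u 2*c = 0"
     "w 0*a+w 1*b+w 2*c = 0" using three_kernel by blast
  define y :: "nat \<Rightarrow> 'a" where "y = (\<lambda>k. if k = 0 then a else if k = 1 then b else if k = 2 then c else 0)"
  have y3: "\<And>k. k \<ge> 3 \<Longrightarrow> y k = 0" by (auto simp: y_def)
  show ?thesis
  proof (rule exI[of _ y], intro conjI)
    show "\<exists>k<p. y k \<noteq> 0"
    proof (cases "a \<noteq> 0")
      case True thus ?thesis using assms by (intro exI[of _ 0]) (auto simp: y_def)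
    next
      case F: False
      show ?thesis
      proof (cases "b \<noteq> 0")
        case True thus ?thesis using assms by (intro exI[of _ 1]) (auto simp: y_def)
      next
        case False thus ?thesis using assms F abc(1) by (intro exI[of _ 2]) (auto simp: y_def)
      qed
    qed
    show "(\<Sum>k<p. u k * y k) = 0" using sum_three[where u=u, OF assms y3] abc by (simp add: y_def)
    show "(\<Sum>k<p. w k * y k) = 0" using sum_three[where u=w, OF assms y3] abc by (simp add: y_def)
  qed
qed

lemma scal:
  fixes F :: "(nat \<Rightarrow> 'a::field) \<Rightarrow> nat \<Rightarrow> 'a"
  assumes add: "\<And>u v j. j<p \<Longrightarrow> F (\<lambda>k. u k + v k) j = F u j + F v j"
  and smul: "\<And>c u j. j<p \<Longrightarrow> F (\<lambda>k. c * u k) j = c * F u j"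
  and loc: "\<And>u v j. (\<forall>k<p. u k = v k) \<Longrightarrow> j < p \<Longrightarrow> F u j = F v j"
  and orth: "p \<ge> 2 \<Longrightarrow> \<forall>u v. (\<Sum>k<p. u k * v k) = 0 \<longrightarrow> (\<Sum>k<p. F u k * v k) = 0"
  and p: "p \<ge> 1"
  shows "\<exists>lam. \<forall>u. \<forall>j<p. F u j = lam * u j"
proof -
  define e :: "nat \<Rightarrow> nat \<Rightarrow> 'a" where "e i = (\<lambda>k. if k = i then 1 else 0)" for i
  define lam where "lam = F (e 0) 0"
  show ?thesis
  proof (cases "p = 1")
    case True
    show ?thesis
    proof (rule exI[of _ lam], intro allI impI)
      fix u j assume j: "j < p"
      hence j0: "j = 0" using True by auto
      have "F u j = F (\<lambda>k. u 0 * e 0 k) 0"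
        unfolding j0 by (rule loc) (use True in \<open>auto simp: e_def\<close>)
      also have "\<dots> = u 0 * lam" using True by (simp add: smul lam_def)
      finally show "F u j = lam * u j" using j0 by simp
    qed
  next
    case False
    hence p2: "p \<ge> 2" using p by auto
    note orth' = orth[OF p2, rule_format]
    have star: "F u i * u j = F u j * u i" if ij: "i < p" "j < p" for u i j
    proof (cases "i = j")
      case True thus ?thesis by simp
    next
      case False
      define v where "v = (\<lambda>k. if k = i then u j else if k = j then - u i else 0)"
      have "(\<Sum>k<p. u k * v k) = u i * u j + u j * (- u i)"
        unfolding v_def by (rule sum_two_pts[OF ij False])
      hence "(\<Sum>k<p. u k * v k) = 0" by (simp add: algebra_simps)
      hence "(\<Sum>k<p. F u k * v k) = 0" by (rule orth')
      moreover have "(\<Sum>k<p. F u k * v k) = F u i * u j + F u j * (- u i)"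
        unfolding v_def by (rule sum_two_pts[OF ij False])
      ultimately show ?thesis by (simp add: algebra_simps)
    qed
    have e_off: "F (e i) j = 0" if "i < p" "j < p" "i \<noteq> j" for i j
      using star[OF that(1,2), of "e i"] that by (simp add: e_def)
    have dstar: "F u j = F (e i) i * u j" if ij: "i < p" "j < p" "i \<noteq> j" for u i j
    proof -
      have 1: "F u j * u i = F u i * u j" using star[OF ij(2,1), of u] .
      define u' where "u' = (\<lambda>k. u k + e i k)"
      have 2: "F u' j * u' i = F u' i * u' j" using star[OF ij(2,1), of u'] .
      have a: "F u' j = F u j" unfolding u'_def using add[OF ij(2)] e_off[OF ij] by simp
      have b: "F u' i = F u i + F (e i) i" unfolding u'_def using add[OF ij(1)] by simp
      have c: "u' i = u i + 1" "u' j = u j" using ij by (auto simp: u'_def e_def)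
      from 2 have "F u j * (u i + 1) = (F u i + F (e i) i) * u j" by (simp only: a b c)
      with 1 show ?thesis by (simp add: algebra_simps)
    qed
    have lam_eq: "F (e i) i = lam" if "i < p" "i \<noteq> 0" for i
      using dstar[of i 0 "e 0"] that p by (simp add: e_def lam_def)
    show ?thesis
    proof (rule exI[of _ lam], intro allI impI)
      fix u j assume j: "j < p"
      define i where "i = (if j = 0 then 1 else 0 :: nat)"
      have i: "i < p" "i \<noteq> j" using p2 j by (auto simp: i_def)
      have "F u j = F (e i) i * u j" by (rule dstar[OF i(1) j i(2)])
      also have "F (e i) i = lam"
        using lam_eq[OF i(1)] by (cases "i = 0") (auto simp: lam_def)
      finally show "F u j = lam * u j" .
    qed
  qed
qed

lemma sum_split3:
  fixes h :: "nat \<Rightarrow> 'a::comm_monoid_add"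
  shows "(\<Sum>j\<in>{0..<p+2}. h j) = h 0 + (\<Sum>k<p. h (Suc k)) + h (p+1)"
proof -
  have "(\<Sum>j\<in>{0..<p+2}. h j) = (\<Sum>j\<in>{0..<Suc p}. h j) + h (p+1)"
    by (simp add: sum.atLeast0_lessThan_Suc)
  also have "(\<Sum>j\<in>{0..<Suc p}. h j) = h 0 + (\<Sum>k\<in>{0..<p}. h (Suc k))"
    by (subst sum.atLeast0_lessThan_Suc_shift) (simp add: comp_def)
  finally show ?thesis by (simp add: atLeast0LessThan)
qed

lemma Mv:
  fixes L C :: "'a::field mat" and x z :: 'a and y :: "nat \<Rightarrow> 'a"
  assumes i: "i < p+2"
  shows "((1 \<cdot>\<^sub>m A_mat p f \<phi> L + 1 \<cdot>\<^sub>m B_mat p g \<psi> C) *\<^sub>v vec (p+2) (\<lambda>j. if j = 0 then x else if j = p+1 then z else y (j-1))) $ i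
   = (if i = 0 then (\<Sum>k<p. L$$(0,k) * y k)
      else if i = p+1 then (f L + g C) * x + (\<Sum>k<p. (\<phi> L)$$(0,k) * y k)
      else (\<psi> C)$$(i-1,0) * x + C$$(i-1,0) * z)"
proof -
  let ?M = "1 \<cdot>\<^sub>m A_mat p f \<phi> L + 1 \<cdot>\<^sub>m B_mat p g \<psi> C"
  let ?v = "vec (p+2) (\<lambda>j. if j = 0 then x else if j = p+1 then z else y (j-1))"
  have "(?M *\<^sub>v ?v) $ i = (\<Sum>j\<in>{0..<p+2}. ?M $$ (i,j) * ?v $ j)"
    using i by (simp add: mult_mat_vec_def scalar_prod_def A_mat_def B_mat_def)
  also have "\<dots> = ?M $$ (i,0) * ?v $ 0 + (\<Sum>k<p. ?M $$ (i,Suc k) * ?v $ Suc k) + ?M $$ (i,p+1) * ?v $ (p+1)"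
    by (rule sum_split3)
  also have "\<dots> = (if i = 0 then (\<Sum>k<p. L$$(0,k) * y k)
      else if i = p+1 then (f L + g C) * x + (\<Sum>k<p. (\<phi> L)$$(0,k) * y k)
      else (\<psi> C)$$(i-1,0) * x + C$$(i-1,0) * z)"
    using i by (auto simp: A_mat_def B_mat_def intro!: sum.cong)
  finally show ?thesis .
qed

interpretation to_ac_hom: field_hom "to_ac :: 'a::field \<Rightarrow> 'a alg_closure"
  by unfold_locales auto

lemma ac_ev:
  fixes M :: "'a::field mat"
  assumes M: "M \<in> carrier_mat n n" and v: "v \<in> carrier_vec n" "v \<noteq> 0\<^sub>v n"
    and eq: "\<And>i. i<n \<Longrightarrow> (M *\<^sub>v v) $ i = c * v $ i"
  shows "ac_eigenvalue M (to_ac c)"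
proof -
  have "eigenvector M v c" unfolding eigenvector_def
    using M v eq by (auto intro!: eq_vecI)
  hence "eigenvalue M c" unfolding eigenvalue_def by blast
  thus ?thesis unfolding ac_eigenvalue_def using to_ac_hom.eigenvalue_hom[OF M] by blast
qed

lemma ev_M:
  fixes L C :: "'a::field mat" and x z c :: 'a and y :: "nat \<Rightarrow> 'a"
  assumes nz: "x \<noteq> 0 \<or> z \<noteq> 0 \<or> (\<exists>k<p. y k \<noteq> 0)"
    and r0: "(\<Sum>k<p. L$$(0,k) * y k) = c * x"
    and rm: "\<And>i. i < p \<Longrightarrow> (\<psi> C)$$(i,0) * x + C$$(i,0) * z = c * y i"
    and rl: "(f L + g C) * x + (\<Sum>k<p. (\<phi> L)$$(0,k) * y k) = c * z"
  shows "ac_eigenvalue (1 \<cdot>\<^sub>m A_mat p f \<phi> L + 1 \<cdot>\<^sub>m B_mat p g \<psi> C) (to_ac c)"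
proof (rule ac_ev[where v = "vec (p+2) (\<lambda>j. if j = 0 then x else if j = p+1 then z else y (j-1))"])
  show "1 \<cdot>\<^sub>m A_mat p f \<phi> L + 1 \<cdot>\<^sub>m B_mat p g \<psi> C \<in> carrier_mat (p+2) (p+2)"
    by (simp add: A_mat_def B_mat_def)
  show "vec (p+2) (\<lambda>j. if j = 0 then x else if j = p+1 then z else y (j-1)) \<in> carrier_vec (p+2)" by simp
  show "vec (p+2) (\<lambda>j. if j = 0 then x else if j = p+1 then z else y (j-1)) \<noteq> 0\<^sub>v (p+2)"
  proof
    assume h: "vec (p+2) (\<lambda>j. if j = 0 then x else if j = p+1 then z else y (j-1)) = 0\<^sub>v (p+2)"
    have zz: "\<And>j. j < p+2 \<Longrightarrow> (if j = 0 then x else if j = p+1 then z else y (j-1)) = 0"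
    proof -
      fix j assume "j < p+2"
      from arg_cong[OF h, of "\<lambda>w. vec_index w j"] this show "(if j = 0 then x else if j = p+1 then z else y (j-1)) = 0" by simp
    qed
    have a: "x = 0" "z = 0" using zz[of 0] zz[of "p+1"] by auto
    have "y k = 0" if "k < p" for k using zz[of "Suc k"] that by auto
    with a nz show False by auto
  qed
  fix i assume i: "i < p+2"
  show "((1 \<cdot>\<^sub>m A_mat p f \<phi> L + 1 \<cdot>\<^sub>m B_mat p g \<psi> C) *\<^sub>v vec (p+2) (\<lambda>j. if j = 0 then x else if j = p+1 then z else y (j-1))) $ i
     = c * vec (p+2) (\<lambda>j. if j = 0 then x else if j = p+1 then z else y (j-1)) $ i"
    unfolding Mv[OF i] using i r0 rl rm[of "i-1"] by auto
qed

lemma one_neq_m1: assumes "CHAR('a::field) \<noteq> 2" shows "(1::'a) \<noteq> -1"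
proof
  assume "(1::'a) = -1"
  hence "(of_nat 2 :: 'a) = 0" by (simp add: eq_neg_iff_add_eq_0)
  hence "CHAR('a) dvd 2" using of_nat_eq_0_iff_char_dvd[of 2, where 'a='a] by simp
  moreover have "CHAR('a) \<noteq> 1" using of_nat_eq_0_iff_char_dvd[of 1, where 'a='a] by auto
  ultimately show False using assms
    using dvd_imp_le[of "CHAR('a)" 2] by (cases "CHAR('a)") (auto simp: le_Suc_eq)
qed

theorem mainTheorem15:
  fixes p :: nat
    and f :: "'a::field mat \<Rightarrow> 'a" and g :: "'a mat \<Rightarrow> 'a"
    and \<phi> :: "'a mat \<Rightarrow> 'a mat" and \<psi> :: "'a mat \<Rightarrow> 'a mat"
  assumes char: "CHAR('a) \<noteq> 2"
    and p: "p \<ge> 1"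
    and f: "lin_mat_form 1 p f"
    and g: "lin_mat_form p 1 g"
    and \<phi>: "lin_mat_map 1 p 1 p \<phi>"
    and \<psi>: "lin_mat_map p 1 p 1 \<psi>"
    and hyp: "(\<forall>L\<in>carrier_mat 1 p. \<forall>C\<in>carrier_mat p 1. \<forall>a b :: 'a.
                 \<forall>k1 k2. ac_eigenvalue (a \<cdot>\<^sub>m A_mat p f \<phi> L + b \<cdot>\<^sub>m B_mat p g \<psi> C) k1 \<and> k1 \<noteq> 0
                     \<and> ac_eigenvalue (a \<cdot>\<^sub>m A_mat p f \<phi> L + b \<cdot>\<^sub>m B_mat p g \<psi> C) k2 \<and> k2 \<noteq> 0
                     \<longrightarrow> k1 = k2)
            \<or> (p \<noteq> 2 \<and>
               (\<forall>L\<in>carrier_mat 1 p. \<forall>C\<in>carrier_mat p 1. \<forall>a b :: 'a.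
                 \<forall>k1 k2 k3. ac_eigenvalue (a \<cdot>\<^sub>m A_mat p f \<phi> L + b \<cdot>\<^sub>m B_mat p g \<psi> C) k1
                     \<and> ac_eigenvalue (a \<cdot>\<^sub>m A_mat p f \<phi> L + b \<cdot>\<^sub>m B_mat p g \<psi> C) k2
                     \<and> ac_eigenvalue (a \<cdot>\<^sub>m A_mat p f \<phi> L + b \<cdot>\<^sub>m B_mat p g \<psi> C) k3
                     \<longrightarrow> k1 = k2 \<or> k1 = k3 \<or> k2 = k3))"
  shows "\<exists>lam mu :: 'a. (\<forall>L\<in>carrier_mat 1 p. \<phi> L = lam \<cdot>\<^sub>m L) \<and> (\<forall>C\<in>carrier_mat p 1. \<psi> C = mu \<cdot>\<^sub>m C)"
proof -
  define rowm :: "(nat \<Rightarrow> 'a) \<Rightarrow> 'a mat" where "rowm u = mat 1 p (\<lambda>(_,k). u k)" for u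
  define colm :: "(nat \<Rightarrow> 'a) \<Rightarrow> 'a mat" where "colm u = mat p 1 (\<lambda>(k,_). u k)" for u
  define M where "M L C = 1 \<cdot>\<^sub>m A_mat p f \<phi> L + 1 \<cdot>\<^sub>m B_mat p g \<psi> C" for L C
  have rowm_car[simp]: "rowm u \<in> carrier_mat 1 p" for u by (simp add: rowm_def)
  have colm_car[simp]: "colm u \<in> carrier_mat p 1" for u by (simp add: colm_def)
  have rowm_ix[simp]: "k < p \<Longrightarrow> rowm u $$ (0,k) = u k" for u k by (simp add: rowm_def)
  have colm_ix[simp]: "k < p \<Longrightarrow> colm u $$ (k,0) = u k" for u k by (simp add: colm_def)
  have ne1: "(1::'a alg_closure) \<noteq> -1"
    using one_neq_m1[OF char] to_ac_eq_iff[of "1::'a" "-1"] by simp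
  have contra: "False" if LC: "L \<in> carrier_mat 1 p" "C \<in> carrier_mat p 1"
    and e1: "ac_eigenvalue (M L C) 1" and e2: "ac_eigenvalue (M L C) (-1)"
    and e0: "p \<noteq> 2 \<Longrightarrow> ac_eigenvalue (M L C) 0" for L C
  proof -
    from hyp show False
    proof
      assume i: "\<forall>L\<in>carrier_mat 1 p. \<forall>C\<in>carrier_mat p 1. \<forall>a b :: 'a.
                 \<forall>k1 k2. ac_eigenvalue (a \<cdot>\<^sub>m A_mat p f \<phi> L + b \<cdot>\<^sub>m B_mat p g \<psi> C) k1 \<and> k1 \<noteq> 0
                     \<and> ac_eigenvalue (a \<cdot>\<^sub>m A_mat p f \<phi> L + b \<cdot>\<^sub>m B_mat p g \<psi> C) k2 \<and> k2 \<noteq> 0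
                     \<longrightarrow> k1 = k2"
      have "\<forall>k1 k2. ac_eigenvalue (M L C) k1 \<and> k1 \<noteq> 0 \<and> ac_eigenvalue (M L C) k2 \<and> k2 \<noteq> 0 \<longrightarrow> k1 = k2"
        using i LC unfolding M_def by blast
      from this[rule_format, of 1 "-1"] e1 e2 ne1 show False by simp
    next
      assume ii: "p \<noteq> 2 \<and>
               (\<forall>L\<in>carrier_mat 1 p. \<forall>C\<in>carrier_mat p 1. \<forall>a b :: 'a.
                 \<forall>k1 k2 k3. ac_eigenvalue (a \<cdot>\<^sub>m A_mat p f \<phi> L + b \<cdot>\<^sub>m B_mat p g \<psi> C) k1
                     \<and> ac_eigenvalue (a \<cdot>\<^sub>m A_mat p f \<phi> L + b \<cdot>\<^sub>m B_mat p g \<psi> C) k2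
                     \<and> ac_eigenvalue (a \<cdot>\<^sub>m A_mat p f \<phi> L + b \<cdot>\<^sub>m B_mat p g \<psi> C) k3
                     \<longrightarrow> k1 = k2 \<or> k1 = k3 \<or> k2 = k3)"
      have "\<forall>k1 k2 k3. ac_eigenvalue (M L C) k1 \<and> ac_eigenvalue (M L C) k2 \<and> ac_eigenvalue (M L C) k3
                     \<longrightarrow> k1 = k2 \<or> k1 = k3 \<or> k2 = k3"
        using ii LC unfolding M_def by blast
      from this[rule_format, of 1 "-1" 0] e1 e2 e0 ii ne1 show False by simp
    qed
  qed
  have phi_car: "\<phi> L \<in> carrier_mat 1 p" if "L \<in> carrier_mat 1 p" for L
    using \<phi> that unfolding lin_mat_map_def by blast
  have phi_add: "\<phi> (L + L') = \<phi> L + \<phi> L'" if "L \<in> carrier_mat 1 p" "L' \<in> carrier_mat 1 p" for L L'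
    using \<phi> that unfolding lin_mat_map_def by blast
  have phi_smul: "\<phi> (c \<cdot>\<^sub>m L) = c \<cdot>\<^sub>m \<phi> L" if "L \<in> carrier_mat 1 p" for c L
    using \<phi> that unfolding lin_mat_map_def by blast
  have psi_car: "\<psi> C \<in> carrier_mat p 1" if "C \<in> carrier_mat p 1" for C
    using \<psi> that unfolding lin_mat_map_def by blast
  have psi_add: "\<psi> (C + C') = \<psi> C + \<psi> C'" if "C \<in> carrier_mat p 1" "C' \<in> carrier_mat p 1" for C C'
    using \<psi> that unfolding lin_mat_map_def by blast
  have psi_smul: "\<psi> (c \<cdot>\<^sub>m C) = c \<cdot>\<^sub>m \<psi> C" if "C \<in> carrier_mat p 1" for c C
    using \<psi> that unfolding lin_mat_map_def by blast
  have rowm_add: "rowm (\<lambda>k. u k + v k) = rowm u + rowm v" for u v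
    by (rule eq_matI) (auto simp: rowm_def)
  have rowm_smul: "rowm (\<lambda>k. c * u k) = c \<cdot>\<^sub>m rowm u" for c u
    by (rule eq_matI) (auto simp: rowm_def)
  have colm_add: "colm (\<lambda>k. u k + v k) = colm u + colm v" for u v
    by (rule eq_matI) (auto simp: colm_def)
  have colm_smul: "colm (\<lambda>k. c * u k) = c \<cdot>\<^sub>m colm u" for c u
    by (rule eq_matI) (auto simp: colm_def)
  have rowm_loc: "rowm u = rowm v" if "\<forall>k<p. u k = v k" for u v
    by (rule eq_matI) (use that in \<open>auto simp: rowm_def\<close>)
  have colm_loc: "colm u = colm v" if "\<forall>k<p. u k = v k" for u v
    by (rule eq_matI) (use that in \<open>auto simp: colm_def\<close>)
  have sum_div: "(\<Sum>k<p. a k * (b k / d)) = (\<Sum>k<p. a k * b k) / d" for a b :: "nat \<Rightarrow> 'a" and d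
    by (simp add: sum_divide_distrib)
  have sum_div': "(\<Sum>k<p. b k / d * a k) = (\<Sum>k<p. a k * b k) / d" for a b :: "nat \<Rightarrow> 'a" and d
    by (simp add: sum_divide_distrib mult.commute)

  define F where "F u j = \<phi> (rowm u) $$ (0,j)" for u j
  have "\<exists>lam. \<forall>u. \<forall>j<p. F u j = lam * u j"
  proof (rule scal)
    show "F (\<lambda>k. u k + v k) j = F u j + F v j" if "j < p" for u v j
      unfolding F_def rowm_add using that phi_add[OF rowm_car rowm_car, of u v] phi_car[OF rowm_car, of u] phi_car[OF rowm_car, of v]
      by simp
    show "F (\<lambda>k. c * u k) j = c * F u j" if "j < p" for c u j
      unfolding F_def rowm_smul using that phi_smul[OF rowm_car, of c u] phi_car[OF rowm_car, of u] by simp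
    show "F u j = F v j" if "\<forall>k<p. u k = v k" "j < p" for u v j
      unfolding F_def using rowm_loc[OF that(1)] by simp
    show "p \<ge> 1" by (rule p)
    show "\<forall>u v. (\<Sum>k<p. u k * v k) = 0 \<longrightarrow> (\<Sum>k<p. F u k * v k) = 0" if p2: "p \<ge> 2"
    proof (rule ccontr)
      assume "\<not> ?thesis"
      then obtain u v where uv: "(\<Sum>k<p. u k * v k) = 0" and dnz: "(\<Sum>k<p. F u k * v k) \<noteq> 0" by blast
      define d where "d = (\<Sum>k<p. F u k * v k)"
      have d: "d \<noteq> 0" using dnz by (simp add: d_def)
      define L where "L = rowm u"
      define C where "C = colm (\<lambda>k. v k / d)"
      have evs: "ac_eigenvalue (M L C) (to_ac s)" if s: "s * s = 1" for s
        unfolding M_def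
      proof (rule ev_M[where x = 0 and z = 1 and y = "\<lambda>k. s * (v k / d)"])
        show "0 \<noteq> 0 \<or> 1 \<noteq> (0::'a) \<or> (\<exists>k<p. s * (v k / d) \<noteq> 0)" by simp
        have "(\<Sum>k<p. L $$ (0, k) * (s * (v k / d))) = (\<Sum>k<p. u k * (s * v k / d))"
          by (rule sum.cong) (auto simp: L_def)
        also have "\<dots> = s * (\<Sum>k<p. u k * v k) / d"
          by (simp add: sum_divide_distrib sum_distrib_left algebra_simps)
        finally show "(\<Sum>k<p. L $$ (0, k) * (s * (v k / d))) = s * 0" using uv by simp
        show "\<psi> C $$ (i, 0) * 0 + C $$ (i, 0) * 1 = s * (s * (v i / d))" if "i < p" for i
          using that s by (simp add: C_def mult.assoc[symmetric])
        have "(\<Sum>k<p. \<phi> L $$ (0, k) * (s * (v k / d))) = (\<Sum>k<p. F u k * (s * v k / d))"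
          by (rule sum.cong) (auto simp: L_def F_def)
        also have "\<dots> = s * d / d"
          by (simp add: sum_divide_distrib sum_distrib_left algebra_simps d_def)
        finally show "(f L + g C) * 0 + (\<Sum>k<p. \<phi> L $$ (0, k) * (s * (v k / d))) = s * 1" using d by simp
      qed
      have e1: "ac_eigenvalue (M L C) 1" using evs[of 1] by simp
      have e2: "ac_eigenvalue (M L C) (-1)" using evs[of "-1"] by simp
      have e0: "ac_eigenvalue (M L C) 0" if "p \<noteq> 2"
      proof -
        have p3: "p \<ge> 3" using that p2 by auto
        obtain y where y: "\<exists>k<p. y k \<noteq> 0" "(\<Sum>k<p. u k * y k) = 0" "(\<Sum>k<p. F u k * y k) = 0"
          using kernel2[OF p3] by blast
        have "ac_eigenvalue (M L C) (to_ac 0)"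
          unfolding M_def
        proof (rule ev_M[where x = 0 and z = 0 and y = y])
          show "0 \<noteq> 0 \<or> 0 \<noteq> (0::'a) \<or> (\<exists>k<p. y k \<noteq> 0)" using y by simp
          have "(\<Sum>k<p. L $$ (0, k) * y k) = (\<Sum>k<p. u k * y k)"
            by (rule sum.cong) (auto simp: L_def)
          thus "(\<Sum>k<p. L $$ (0, k) * y k) = 0 * 0" using y by simp
          show "\<psi> C $$ (i, 0) * 0 + C $$ (i, 0) * 0 = 0 * y i" for i by simp
          have "(\<Sum>k<p. \<phi> L $$ (0, k) * y k) = (\<Sum>k<p. F u k * y k)"
            by (rule sum.cong) (auto simp: L_def F_def)
          thus "(f L + g C) * 0 + (\<Sum>k<p. \<phi> L $$ (0, k) * y k) = 0 * 0" using y by simp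
        qed
        thus ?thesis by simp
      qed
      show False by (rule contra[OF _ _ e1 e2 e0]) (simp_all only: L_def C_def rowm_car colm_car not_False_eq_True)
    qed
  qed
  then obtain lam where lam: "\<forall>u. \<forall>j<p. F u j = lam * u j" by blast
  have phi_scal: "\<phi> L = lam \<cdot>\<^sub>m L" if L: "L \<in> carrier_mat 1 p" for L
  proof -
    have Lr: "L = rowm (\<lambda>k. L $$ (0,k))"
      by (rule eq_matI) (use L in \<open>auto simp: rowm_def\<close>)
    show ?thesis
    proof (rule eq_matI)
      show "dim_row (\<phi> L) = dim_row (lam \<cdot>\<^sub>m L)" "dim_col (\<phi> L) = dim_col (lam \<cdot>\<^sub>m L)"
        using phi_car[OF L] L by auto
      fix i j assume ij: "i < dim_row (lam \<cdot>\<^sub>m L)" "j < dim_col (lam \<cdot>\<^sub>m L)"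
      hence i0: "i = 0" and j: "j < p" using L by auto
      have "\<phi> L $$ (i, j) = F (\<lambda>k. L $$ (0,k)) j" unfolding F_def i0 using Lr by simp
      also have "\<dots> = lam * L $$ (0,j)" using lam j by blast
      finally show "\<phi> L $$ (i, j) = (lam \<cdot>\<^sub>m L) $$ (i, j)" using i0 j L by simp
    qed
  qed
  define G where "G u j = \<psi> (colm u) $$ (j,0)" for u j
  have "\<exists>mu. \<forall>u. \<forall>j<p. G u j = mu * u j"
  proof (rule scal)
    show "G (\<lambda>k. u k + v k) j = G u j + G v j" if "j < p" for u v j
      unfolding G_def colm_add using that psi_add[OF colm_car colm_car, of u v] psi_car[OF colm_car, of u] psi_car[OF colm_car, of v]
      by simp
    show "G (\<lambda>k. c * u k) j = c * G u j" if "j < p" for c u j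
      unfolding G_def colm_smul using that psi_smul[OF colm_car, of c u] psi_car[OF colm_car, of u] by simp
    show "G u j = G v j" if "\<forall>k<p. u k = v k" "j < p" for u v j
      unfolding G_def using colm_loc[OF that(1)] by simp
    show "p \<ge> 1" by (rule p)
    show "\<forall>u v. (\<Sum>k<p. u k * v k) = 0 \<longrightarrow> (\<Sum>k<p. G u k * v k) = 0" if p2: "p \<ge> 2"
    proof (rule ccontr)
      assume "\<not> ?thesis"
      then obtain u v where uv: "(\<Sum>k<p. u k * v k) = 0" and dnz: "(\<Sum>k<p. G u k * v k) \<noteq> 0" by blast
      define d where "d = (\<Sum>k<p. G u k * v k)"
      have d: "d \<noteq> 0" using dnz by (simp add: d_def)
      define L where "L = rowm (\<lambda>k. v k / d)"
      define C where "C = colm u"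
      have Lc: "L \<in> carrier_mat 1 p" unfolding L_def by (rule rowm_car)
      have Cc: "C \<in> carrier_mat p 1" unfolding C_def by (rule colm_car)
      have phiL: "\<phi> L $$ (0,k) = lam * (v k / d)" if "k < p" for k
        using phi_scal[OF Lc] that Lc by (simp add: L_def)
      have evs: "ac_eigenvalue (M L C) (to_ac s)" if s: "s * s = 1" for s
      proof -
        define \<beta> where "\<beta> = s * (f L + g C) + lam"
        define y where "y k = G u k + \<beta> * u k" for k
        have S: "(\<Sum>k<p. L $$ (0, k) * y k) = 1"
        proof -
          have "(\<Sum>k<p. L $$ (0, k) * y k) = (\<Sum>k<p. G u k * v k / d + \<beta> * (u k * v k / d))"
            by (rule sum.cong) (auto simp: L_def y_def algebra_simps)
          also have "\<dots> = (\<Sum>k<p. G u k * v k) / d + \<beta> * ((\<Sum>k<p. u k * v k) / d)"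
            by (simp add: sum.distrib sum_distrib_left sum_divide_distrib)
          also have "\<dots> = 1" using uv d by (simp add: d_def[symmetric])
          finally show ?thesis .
        qed
        have S2: "(\<Sum>k<p. \<phi> L $$ (0, k) * y k) = lam"
        proof -
          have "(\<Sum>k<p. \<phi> L $$ (0, k) * y k) = (\<Sum>k<p. lam * (L $$ (0, k) * y k))"
            by (rule sum.cong) (simp_all add: phiL, simp add: L_def)
          also have "\<dots> = lam" using S by (simp add: sum_distrib_left[symmetric])
          finally show ?thesis .
        qed
        show ?thesis unfolding M_def
        proof (rule ev_M[where x = s and z = "s * \<beta>" and y = y])
          show "s \<noteq> 0 \<or> s * \<beta> \<noteq> 0 \<or> (\<exists>k<p. y k \<noteq> 0)" using s by auto
          show "(\<Sum>k<p. L $$ (0, k) * y k) = s * s" using S s by simp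
          show "\<psi> C $$ (i, 0) * s + C $$ (i, 0) * (s * \<beta>) = s * y i" if "i < p" for i
            using that by (simp add: C_def G_def y_def algebra_simps)
          show "(f L + g C) * s + (\<Sum>k<p. \<phi> L $$ (0, k) * y k) = s * (s * \<beta>)"
          proof -
            have "s * (s * \<beta>) = (s * s) * \<beta>" by (rule mult.assoc[symmetric])
            hence b: "s * (s * \<beta>) = \<beta>" by (simp only: s mult_1_left)
            have "(f L + g C) * s + lam = \<beta>" unfolding \<beta>_def by (simp only: mult.commute)
            thus ?thesis by (simp only: S2 b)
          qed
        qed
      qed
      have e1: "ac_eigenvalue (M L C) 1" using evs[of 1] by simp
      have e2: "ac_eigenvalue (M L C) (-1)" using evs[of "-1"] by simp
      have e0: "ac_eigenvalue (M L C) 0" if "p \<noteq> 2"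
      proof -
        have p3: "p \<ge> 3" using that p2 by auto
        obtain y where y: "\<exists>k<p. y k \<noteq> 0" "(\<Sum>k<p. v k / d * y k) = 0"
          using kernel2[OF p3, of "\<lambda>k. v k / d" "\<lambda>k. v k / d"] by blast
        have "ac_eigenvalue (M L C) (to_ac 0)"
          unfolding M_def
        proof (rule ev_M[where x = 0 and z = 0 and y = y])
          show "0 \<noteq> 0 \<or> 0 \<noteq> (0::'a) \<or> (\<exists>k<p. y k \<noteq> 0)" using y by simp
          have "(\<Sum>k<p. L $$ (0, k) * y k) = (\<Sum>k<p. v k / d * y k)"
            by (rule sum.cong) (auto simp: L_def)
          thus "(\<Sum>k<p. L $$ (0, k) * y k) = 0 * 0" using y by simp
          show "\<psi> C $$ (i, 0) * 0 + C $$ (i, 0) * 0 = 0 * y i" for i by simp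
          have "(\<Sum>k<p. \<phi> L $$ (0, k) * y k) = (\<Sum>k<p. lam * (v k / d * y k))"
            by (rule sum.cong) (auto simp: phiL)
          also have "\<dots> = lam * (\<Sum>k<p. v k / d * y k)" by (rule sum_distrib_left[symmetric])
          also have "\<dots> = 0" using y(2) by (simp only: mult_zero_right)
          finally show "(f L + g C) * 0 + (\<Sum>k<p. \<phi> L $$ (0, k) * y k) = 0 * 0" by simp
        qed
        thus ?thesis by simp
      qed
      show False by (rule contra[OF Lc Cc e1 e2 e0])
    qed
  qed
  then obtain mu where mu: "\<forall>u. \<forall>j<p. G u j = mu * u j" by blast
  have psi_scal: "\<psi> C = mu \<cdot>\<^sub>m C" if C: "C \<in> carrier_mat p 1" for C
  proof -
    have Cr: "C = colm (\<lambda>k. C $$ (k,0))"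
      by (rule eq_matI) (use C in \<open>auto simp: colm_def\<close>)
    show ?thesis
    proof (rule eq_matI)
      show "dim_row (\<psi> C) = dim_row (mu \<cdot>\<^sub>m C)" "dim_col (\<psi> C) = dim_col (mu \<cdot>\<^sub>m C)"
        using psi_car[OF C] C by auto
      fix i j assume ij: "i < dim_row (mu \<cdot>\<^sub>m C)" "j < dim_col (mu \<cdot>\<^sub>m C)"
      hence j0: "j = 0" and i: "i < p" using C by auto
      have "\<psi> C $$ (i, j) = G (\<lambda>k. C $$ (k,0)) i" unfolding G_def j0 using Cr by simp
      also have "\<dots> = mu * C $$ (i,0)" using mu i by blast
      finally show "\<psi> C $$ (i, j) = (mu \<cdot>\<^sub>m C) $$ (i, j)" using j0 i C by simp
    qed
  qed
  show ?thesis
  proof (rule exI[of _ lam], rule exI[of _ mu], intro conjI ballI)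
    fix L :: "'a mat" assume "L \<in> carrier_mat 1 p" thus "\<phi> L = lam \<cdot>\<^sub>m L" by (rule phi_scal)
  next
    fix C :: "'a mat" assume "C \<in> carrier_mat p 1" thus "\<psi> C = mu \<cdot>\<^sub>m C" by (rule psi_scal)
  qed

qed

end
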